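(* Let $E\subset\mathbb N$ with $\Phi_E$ regular, conformal measure $\mu$ and conformal dimension $\delta$, and assume $\#(E\cap[N,2N])\asymp f(N)$ where $f$ is regularly varying with exponent $s<2\delta$. Then for all sufficiently small $r>0$, $\mu(B(0,r))\asymp r^{2\delta}f(r^{-1})$. Moreover, for $a\in E$ and $a^{-1}\le r\le1$ (with $r$ sufficiently small), $\mu(B([a],r))\asymp r^{2\delta}f(r^{-1})$.
   Context: $\phi_a(x)=1/(a+x)$; $\phi_\omega=\phi_{\omega_1}\circ\cdots\circ\phi_{\omega_{|\omega|}}$; $\|\phi_\omega'\|=\sup_{[0,1]}|\phi_\omega'|$; $[a]=\phi_a([0,1])$. Regularity: the pressure $\mathrm P_E(s)=\lim_n\frac1n\log\sum_{\omega\in E^n}\|\phi_\omega'\|^s$ vanishes at $s=\delta$; $\mu$ is the unique Borel probability measure on $\Lambda_E$ (irrationals in $(0,1)$ with continued fraction entries in $E$) with $\mu(A)=\sum_{a\in E}\int_{\phi_a^{-1}(A)}|\phi_a'|^\delta d\mu$; in particular $\mu([a])\asymp a^{-2\delta}$. $f$ regularly varying with exponent $s$: $f(ax)/f(x)\to a^s$ for all $a>1$. $B([a],r)$ is the open $r$-neighbourhood of $[a]$. $\asymp$ means comparability up to multiplicative constants independent of $r$ and $a$. *)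

theory Defs
  imports "HOL-Probability.Probability"
begin

definition phi :: "nat \<Rightarrow> real \<Rightarrow> real" where
  "phi a x = 1 / (real a + x)"

definition phiw :: "nat list \<Rightarrow> real \<Rightarrow> real" where
  "phiw w = foldr (\<lambda>a g. phi a \<circ> g) w id"

definition dnorm :: "nat list \<Rightarrow> real" where
  "dnorm w = (SUP x\<in>{0..1}. \<bar>deriv (phiw w) x\<bar>)"

definition words :: "nat set \<Rightarrow> nat \<Rightarrow> nat list set" where
  "words E n = {w. length w = n \<and> set w \<subseteq> E}"

text \<open>The pressure P_E(s) = lim (1/n) log sum_{w in E^n} ||phi_w'||^s exists and equals 0
  (in particular all the sums are finite).\<close>
definition pressure_vanishes_at :: "nat set \<Rightarrow> real \<Rightarrow> bool" where
  "pressure_vanishes_at E s \<longleftrightarrow>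
     (\<forall>n. (\<lambda>w. dnorm w powr s) summable_on words E n) \<and>
     (\<lambda>n. ln (\<Sum>\<^sub>\<infinity>w\<in>words E n. dnorm w powr s) / real n) \<longlonglongrightarrow> 0"

definition gauss :: "real \<Rightarrow> real" where
  "gauss x = frac (1 / x)"

definition cf_digit :: "real \<Rightarrow> nat \<Rightarrow> nat" where
  "cf_digit x n = nat \<lfloor>1 / ((gauss ^^ n) x)\<rfloor>"

definition LambdaE :: "nat set \<Rightarrow> real set" where
  "LambdaE E = {x. 0 < x \<and> x < 1 \<and> x \<notin> \<rat> \<and> (\<forall>n. cf_digit x n \<in> E)}"

definition conformal_measure :: "nat set \<Rightarrow> real \<Rightarrow> real measure \<Rightarrow> bool" where
  "conformal_measure E \<delta> \<mu> \<longleftrightarrow>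
     sets \<mu> = sets borel \<and> prob_space \<mu> \<and> emeasure \<mu> (LambdaE E) = 1 \<and>
     (\<forall>A\<in>sets borel. emeasure \<mu> A =
        (\<integral>\<^sup>+ a. (\<integral>\<^sup>+ x\<in>(phi a -` A \<inter> {0..1}). ennreal (\<bar>deriv (phi a) x\<bar> powr \<delta>) \<partial>\<mu>)
          \<partial>count_space E))"

definition regularly_varying :: "(real \<Rightarrow> real) \<Rightarrow> real \<Rightarrow> bool" where
  "regularly_varying f s \<longleftrightarrow> f \<in> borel_measurable borel \<and>
     (\<forall>\<^sub>F x in at_top. f x > 0) \<and>
     (\<forall>a>1. ((\<lambda>x. f (a * x) / f x) \<longlongrightarrow> a powr s) at_top)"

definition cyl :: "nat \<Rightarrow> real set" where
  "cyl a = phi a ` {0..1}"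

definition nbhd :: "real set \<Rightarrow> real \<Rightarrow> real set" where
  "nbhd S r = (\<Union>x\<in>S. ball x r)"

end

theory Submission
  imports Defs
begin


lemma uct_sets:
  fixes k :: "real \<Rightarrow> real" and x :: "nat \<Rightarrow> real"
  assumes km: "k \<in> borel_measurable borel"
    and lim: "\<And>u. u \<ge> 0 \<Longrightarrow> ((\<lambda>t. k (t+u) - k t) \<longlongrightarrow> 0) at_top"
    and xn: "\<And>n. x n \<ge> real n"
  shows "\<exists>N0. \<forall>N\<ge>N0. measure lborel {v\<in>{0..2}. \<forall>n\<ge>N. \<bar>k (x n + v) - k (x n)\<bar> \<le> 1} > 3/2"
    and "{v\<in>{0..2}. \<forall>n\<ge>N. \<bar>k (x n + v) - k (x n)\<bar> \<le> 1} \<in> sets lborel"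
proof -
  define A where "A N = {v\<in>{0..2::real}. \<forall>n\<ge>N. \<bar>k (x n + v) - k (x n)\<bar> \<le> 1}" for N
  have Am: "A N \<in> sets lborel" for N
  proof -
    have "{v. \<forall>n\<ge>N. \<bar>k (x n + v) - k (x n)\<bar> \<le> 1} \<in> sets borel"
      using km by measurable
    then have "{0..2} \<inter> {v. \<forall>n\<ge>N. \<bar>k (x n + v) - k (x n)\<bar> \<le> 1} \<in> sets borel"
      by (intro sets.Int atLeastAtMost_borel)
    moreover have "A N = {0..2} \<inter> {v. \<forall>n\<ge>N. \<bar>k (x n + v) - k (x n)\<bar> \<le> 1}"
      unfolding A_def by blast
    ultimately show ?thesis unfolding sets_lborel by metis
  qed
  then show "{v\<in>{0..2}. \<forall>n\<ge>N. \<bar>k (x n + v) - k (x n)\<bar> \<le> 1} \<in> sets lborel"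
    by (simp only: A_def)
  have inc: "incseq A" unfolding A_def incseq_def by auto
  have xlim: "filterlim x at_top sequentially"
    by (rule filterlim_at_top_mono[OF filterlim_real_sequentially]) (simp add: xn)
  have un: "(\<Union>N. A N) = {0..2}"
  proof
    show "(\<Union>N. A N) \<subseteq> {0..2}" unfolding A_def by auto
    show "{0..2} \<subseteq> (\<Union>N. A N)"
    proof
      fix v :: real assume v: "v \<in> {0..2}"
      have "((\<lambda>t. k (t+v) - k t) \<longlongrightarrow> 0) at_top" using lim v by auto
      then have "((\<lambda>n. k (x n + v) - k (x n)) \<longlongrightarrow> 0) sequentially"
        using xlim by (rule filterlim_compose)
      then have "eventually (\<lambda>n. dist (k (x n + v) - k (x n)) 0 < 1) sequentially"
        by (rule tendstoD) simp
      then obtain N where "\<forall>n\<ge>N. \<bar>k (x n + v) - k (x n)\<bar> < 1"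
        by (auto simp: eventually_sequentially dist_real_def)
      then have "v \<in> A N" using v unfolding A_def by (auto intro: less_imp_le)
      then show "v \<in> (\<Union>N. A N)" by blast
    qed
  qed
  have "(\<lambda>N. measure lborel (A N)) \<longlonglongrightarrow> measure lborel (\<Union>N. A N)"
  proof (rule Lim_measure_incseq[OF _ inc])
    show "range A \<subseteq> sets lborel" using Am by blast
    show "emeasure lborel (\<Union>N. A N) \<noteq> \<infinity>" unfolding un by simp
  qed
  then have "(\<lambda>N. measure lborel (A N)) \<longlonglongrightarrow> 2" using un by simp
  then have "eventually (\<lambda>N. measure lborel (A N) > 3/2) sequentially"
    by (rule order_tendstoD) simp
  then show "\<exists>N0. \<forall>N\<ge>N0. measure lborel {v\<in>{0..2}. \<forall>n\<ge>N. \<bar>k (x n + v) - k (x n)\<bar> \<le> 1} > 3/2"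
    unfolding A_def eventually_sequentially by simp
qed

lemma uct_core:
  fixes k :: "real \<Rightarrow> real"
  assumes km: "k \<in> borel_measurable borel"
    and lim: "\<And>u. u \<ge> 0 \<Longrightarrow> ((\<lambda>t. k (t+u) - k t) \<longlongrightarrow> 0) at_top"
  shows "\<exists>T. \<forall>t\<ge>T. \<forall>u\<in>{0..1}. \<bar>k (t+u) - k t\<bar> \<le> 2"
proof (rule ccontr)
  assume H: "\<not> ?thesis"
  have "\<exists>t u. t \<ge> real n \<and> u \<in> {0..1} \<and> \<bar>k (t+u) - k t\<bar> > 2" for n
  proof -
    from H have "\<not> (\<forall>t\<ge>real n. \<forall>u\<in>{0..1}. \<bar>k (t+u) - k t\<bar> \<le> 2)" by blast
    then show ?thesis by (meson not_le)
  qed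
  then obtain t u where t: "\<And>n. t n \<ge> real n" and u: "\<And>n. u n \<in> {0..1}"
    and big: "\<And>n. \<bar>k (t n + u n) - k (t n)\<bar> > 2" by metis
  define x' where "x' n = t n + u n" for n
  have x': "x' n \<ge> real n" for n using t[of n] u[of n] by (auto simp: x'_def)
  obtain N1 where N1: "\<forall>N\<ge>N1. measure lborel {v\<in>{0..2}. \<forall>n\<ge>N. \<bar>k (t n + v) - k (t n)\<bar> \<le> 1} > 3/2"
    using uct_sets(1)[OF km lim t] by blast
  obtain N2 where N2: "\<forall>N\<ge>N2. measure lborel {v\<in>{0..2}. \<forall>n\<ge>N. \<bar>k (x' n + v) - k (x' n)\<bar> \<le> 1} > 3/2"
    using uct_sets(1)[OF km lim x'] by blast
  define N where "N = max N1 N2"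
  define U where "U = {v\<in>{0..2}. \<forall>n\<ge>N. \<bar>k (t n + v) - k (t n)\<bar> \<le> 1}"
  define V where "V = {v\<in>{0..2}. \<forall>n\<ge>N. \<bar>k (x' n + v) - k (x' n)\<bar> \<le> 1}"
  define W where "W = {w. - u N + w \<in> V}"
  have mU: "measure lborel U > 3/2" using N1[rule_format, OF max.cobounded1[of N1 N2]] unfolding U_def N_def .
  have mV: "measure lborel V > 3/2" using N2[rule_format, OF max.cobounded2[of N2 N1]] unfolding V_def N_def by (simp only: max.commute)
  have Us: "U \<in> sets lborel" unfolding U_def by (rule uct_sets(2)[OF km lim t])
  have Vs: "V \<in> sets lborel" unfolding V_def by (rule uct_sets(2)[OF km lim x'])
  have plm: "(\<lambda>w::real. - u N + w) \<in> borel \<rightarrow>\<^sub>M borel" by measurable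
  have Wpre: "W = (\<lambda>w::real. - u N + w) -` V \<inter> space borel" by (auto simp: W_def)
  have Ws: "W \<in> sets lborel"
    unfolding Wpre sets_lborel by (rule measurable_sets[OF plm]) (use Vs in \<open>simp only: sets_lborel\<close>)
  have eW: "emeasure lborel W = emeasure lborel V"
  proof -
    have "emeasure lborel V = emeasure (distr lborel borel ((+) (- u N))) V"
      by (simp only: lborel_distr_plus)
    also have "\<dots> = emeasure lborel ((+) (- u N) -` V \<inter> space lborel)"
      by (rule emeasure_distr) (metis plm measurable_lborel2, metis Vs sets_lborel)
    also have "\<dots> = emeasure lborel W" by (simp add: W_def vimage_def)
    finally show ?thesis by simp
  qed
  hence mW: "measure lborel W = measure lborel V" by (simp add: measure_def)
  have subU: "U \<subseteq> {0..3}" by (auto simp: U_def)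
  have subW: "W \<subseteq> {0..3}" using u[of N] by (auto simp: W_def V_def)
  have disj: "U \<inter> W = {}"
  proof (rule ccontr)
    assume "U \<inter> W \<noteq> {}" then obtain w where wU: "w\<in>U" and wW: "w\<in>W" by blast
    have 1: "\<bar>k (t N + w) - k (t N)\<bar> \<le> 1" using wU by (auto simp: U_def)
    have 2: "\<bar>k (x' N + (- u N + w)) - k (x' N)\<bar> \<le> 1" using wW by (auto simp: W_def V_def)
    have "x' N + (- u N + w) = t N + w" by (simp add: x'_def)
    with 1 2 have "\<bar>k (t N + u N) - k (t N)\<bar> \<le> 2" by (simp add: x'_def)
    with big[of N] show False by linarith
  qed
  have three: "(3::ennreal) < \<infinity>" by simp
  have finU: "emeasure lborel U \<noteq> \<infinity>"
  proof -
    have "emeasure lborel U \<le> emeasure lborel {0..3::real}"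
      by (rule emeasure_mono[OF subU]) (simp only: sets_lborel atLeastAtMost_borel)
    then have "emeasure lborel U \<le> 3" by simp
    then show ?thesis using three by (metis le_less_trans less_irrefl)
  qed
  have finW: "emeasure lborel W \<noteq> \<infinity>"
  proof -
    have "emeasure lborel W \<le> emeasure lborel {0..3::real}"
      by (rule emeasure_mono[OF subW]) (simp only: sets_lborel atLeastAtMost_borel)
    then have "emeasure lborel W \<le> 3" by simp
    then show ?thesis using three by (metis le_less_trans less_irrefl)
  qed
  have "measure lborel (U \<union> W) = measure lborel U + measure lborel W"
    by (rule measure_Union[OF finU finW Us Ws disj])
  moreover have "measure lborel (U \<union> W) \<le> measure lborel {0..3::real}"
  proof (rule measure_mono_fmeasurable)
    show "U \<union> W \<subseteq> {0..3}" using subU subW by blast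
    show "U \<union> W \<in> sets lborel" using Us Ws by (rule sets.Un)
    show "{0..3::real} \<in> fmeasurable lborel" by (simp add: fmeasurable_def)
  qed
  ultimately show False using mU mV mW by simp
qed

lemma rv_uct:
  assumes rv: "regularly_varying f s"
  shows "\<exists>K X. K \<ge> 1 \<and> X > 0 \<and> (\<forall>x\<ge>X. f x > 0 \<and>
           (\<forall>l\<in>{1..2}. f (l*x) \<le> K * f x \<and> f x \<le> K * f (l*x)))"
proof -
  from rv have fm: "f \<in> borel_measurable borel" and ev: "eventually (\<lambda>x. f x > 0) at_top"
    and lim: "\<And>a. a > 1 \<Longrightarrow> ((\<lambda>x. f (a*x) / f x) \<longlongrightarrow> a powr s) at_top"
    unfolding regularly_varying_def by auto
  obtain X0 where X0: "\<And>x. x \<ge> X0 \<Longrightarrow> f x > 0" using ev by (auto simp: eventually_at_top_linorder)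
  define k where "k t = ln (f (exp t)) - s * t" for t
  have km: "k \<in> borel_measurable borel" unfolding k_def using fm by measurable
  have klim: "((\<lambda>t. k (t+u) - k t) \<longlongrightarrow> 0) at_top" if u: "u \<ge> 0" for u
  proof (cases "u = 0")
    case True then show ?thesis by simp
  next
    case False
    then have a1: "exp u > 1" using u by simp
    have "((\<lambda>t. f (exp u * exp t) / f (exp t)) \<longlongrightarrow> exp u powr s) at_top"
      using lim[OF a1] exp_at_top by (rule filterlim_compose)
    then have "((\<lambda>t. ln (f (exp u * exp t) / f (exp t))) \<longlongrightarrow> ln (exp u powr s)) at_top"
      by (rule tendsto_ln) simp
    moreover have "ln (exp u powr s) = s * u" by (simp add: ln_powr)
    ultimately have L: "((\<lambda>t. ln (f (exp u * exp t) / f (exp t)) - s * u) \<longlongrightarrow> 0) at_top"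
      using tendsto_diff[OF _ tendsto_const[of "s*u"]] by fastforce
    have "eventually (\<lambda>t. X0 \<le> exp t) at_top"
      using exp_at_top by (simp add: filterlim_at_top)
    then have "eventually (\<lambda>t. ln (f (exp u * exp t) / f (exp t)) - s * u = k (t+u) - k t) at_top"
    proof (rule eventually_mono)
      fix t assume t: "X0 \<le> exp t"
      have p1: "f (exp t) > 0" using X0 t by simp
      have "exp t \<le> exp u * exp t" using a1 by simp
      then have p2: "f (exp u * exp t) > 0" using X0 t by (meson order_trans)
      have "exp (t + u) = exp u * exp t" by (simp add: exp_add)
      then show "ln (f (exp u * exp t) / f (exp t)) - s * u = k (t+u) - k t"
        using p1 p2 by (simp add: k_def ln_div algebra_simps)
    qed
    then show ?thesis using L by (rule Lim_transform_eventually[rotated])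
  qed
  obtain T where T: "\<forall>t\<ge>T. \<forall>u\<in>{0..1}. \<bar>k (t+u) - k t\<bar> \<le> 2" using uct_core[OF km klim] by blast
  define K where "K = exp (2 + \<bar>s\<bar>)"
  define X where "X = max (exp T) (max X0 1)"
  have K1: "K \<ge> 1" unfolding K_def by simp
  have X0': "X > 0" unfolding X_def by simp
  have main: "f x > 0 \<and> (\<forall>l\<in>{1..2}. f (l*x) \<le> K * f x \<and> f x \<le> K * f (l*x))" if x: "X \<le> x" for x
  proof -
    have xp: "x > 0" using x X0' by simp
    have fx: "f x > 0" using X0 x by (simp add: X_def)
    have tT: "T \<le> ln x" using x xp by (simp add: X_def ln_ge_iff)
    have "f (l*x) \<le> K * f x \<and> f x \<le> K * f (l*x)" if l: "l \<in> {1..2}" for l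
    proof -
      have lp: "l > 0" "l \<ge> 1" "l \<le> 2" using l by auto
      have flx: "f (l*x) > 0" using X0 x lp xp by (simp add: X_def) (smt (verit) mult_le_cancel_right1)
      have u0: "ln l \<ge> 0" using lp by simp
      have "ln l \<le> ln 2" using lp by simp
      then have u1: "ln l \<le> 1" using ln_2_less_1 by linarith
      have "\<bar>k (ln x + ln l) - k (ln x)\<bar> \<le> 2" using T tT u0 u1 by auto
      moreover have "exp (ln x + ln l) = l * x" using xp lp by (simp add: exp_add)
      ultimately have B: "\<bar>ln (f (l*x)) - ln (f x) - s * ln l\<bar> \<le> 2"
        using xp by (simp add: k_def algebra_simps)
      have "\<bar>s * ln l\<bar> \<le> \<bar>s\<bar>" using u0 u1 by (simp add: abs_mult mult_left_le)
      then have B1: "ln (f (l*x)) \<le> ln (f x) + (2 + \<bar>s\<bar>)" and B2: "ln (f x) \<le> ln (f (l*x)) + (2 + \<bar>s\<bar>)"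
        using B by linarith+
      have "f (l*x) = exp (ln (f (l*x)))" using flx by simp
      also have "\<dots> \<le> exp (ln (f x) + (2 + \<bar>s\<bar>))" using B1 by simp
      also have "\<dots> = K * f x" using fx by (simp add: exp_add K_def)
      finally have 1: "f (l*x) \<le> K * f x" .
      have "f x = exp (ln (f x))" using fx by simp
      also have "\<dots> \<le> exp (ln (f (l*x)) + (2 + \<bar>s\<bar>))" using B2 by simp
      also have "\<dots> = K * f (l*x)" using flx by (simp add: exp_add K_def)
      finally show ?thesis using 1 by simp
    qed
    then show ?thesis using fx by blast
  qed
  show ?thesis using K1 X0' main by blast
qed



lemma phi_eq: "phi a = (\<lambda>y. 1 / (real a + y))"
  by (rule ext) (simp add: phi_def)

lemma deriv_phi:
  assumes "real a + x > 0"
  shows "deriv (phi a) x = - 1 / (real a + x)^2"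
proof -
  have "((\<lambda>y. 1 / (real a + y)) has_real_derivative - 1 / (real a + x)^2) (at x)"
    using assms by (auto intro!: derivative_eq_intros simp: power2_eq_square)
  then show ?thesis unfolding phi_eq by (rule DERIV_imp_deriv)
qed

lemma integrand_eq:
  assumes "a \<ge> 1" "x \<ge> 0"
  shows "\<bar>deriv (phi a) x\<bar> powr \<delta> = (real a + x) powr (-2*\<delta>)"
proof -
  have p: "real a + x > 0" using assms by simp
  have "\<bar>deriv (phi a) x\<bar> = (real a + x) powr (-2)"
    using p by (simp add: deriv_phi[OF p] powr_minus_divide)
  then show ?thesis by (simp add: powr_powr)
qed

lemma integrand_bounds:
  assumes "a \<ge> 1" "x \<in> {0..1}" "\<delta> \<ge> 0"
  shows "(real a + 1) powr (-2*\<delta>) \<le> \<bar>deriv (phi a) x\<bar> powr \<delta>"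
    and "\<bar>deriv (phi a) x\<bar> powr \<delta> \<le> real a powr (-2*\<delta>)"
  using assms by (auto simp: integrand_eq intro!: powr_mono2')

lemma conf_parts:
  assumes "conformal_measure E \<delta> \<mu>"
  shows "sets \<mu> = sets borel" "prob_space \<mu>" "emeasure \<mu> {0..1} = 1"
    and "\<And>A. A \<in> sets borel \<Longrightarrow> emeasure \<mu> A =
        (\<integral>\<^sup>+ a. (\<integral>\<^sup>+ x\<in>(phi a -` A \<inter> {0..1}). ennreal (\<bar>deriv (phi a) x\<bar> powr \<delta>) \<partial>\<mu>) \<partial>count_space E)"
proof -
  show s: "sets \<mu> = sets borel" and p: "prob_space \<mu>"
    and "\<And>A. A \<in> sets borel \<Longrightarrow> emeasure \<mu> A =
        (\<integral>\<^sup>+ a. (\<integral>\<^sup>+ x\<in>(phi a -` A \<inter> {0..1}). ennreal (\<bar>deriv (phi a) x\<bar> powr \<delta>) \<partial>\<mu>) \<partial>count_space E)"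
    using assms unfolding conformal_measure_def by auto
  have L: "emeasure \<mu> (LambdaE E) = 1" using assms unfolding conformal_measure_def by auto
  have sub: "LambdaE E \<subseteq> {0..1}" unfolding LambdaE_def by auto
  have m: "{0..1::real} \<in> sets \<mu>" unfolding s by (rule atLeastAtMost_borel)
  have "1 \<le> emeasure \<mu> {0..1}" using emeasure_mono[OF sub m] L by simp
  moreover have "emeasure \<mu> {0..1} \<le> 1" using prob_space.emeasure_le_1[OF p] by blast
  ultimately show "emeasure \<mu> {0..1} = 1" by (rule antisym[rotated])
qed

lemma conf_lower:
  assumes conf: "conformal_measure E \<delta> \<mu>" and E0: "0 \<notin> E" and \<delta>: "\<delta> \<ge> 0"
    and A: "A \<in> sets borel" and \<rho>: "\<rho> > 0" and sub: "{0<..<\<rho>} \<subseteq> A"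
  shows "(\<integral>\<^sup>+ b. indicator {b. real b > 1/\<rho>} b * ennreal ((real b + 1) powr (-2*\<delta>)) \<partial>count_space E)
           \<le> emeasure \<mu> A"
proof -
  note cp = conf_parts[OF conf]
  have m01: "{0..1::real} \<in> sets \<mu>" unfolding cp(1) by (rule atLeastAtMost_borel)
  have "(\<integral>\<^sup>+ b. indicator {b. real b > 1/\<rho>} b * ennreal ((real b + 1) powr (-2*\<delta>)) \<partial>count_space E)
     \<le> (\<integral>\<^sup>+ a. (\<integral>\<^sup>+ x\<in>(phi a -` A \<inter> {0..1}). ennreal (\<bar>deriv (phi a) x\<bar> powr \<delta>) \<partial>\<mu>) \<partial>count_space E)"
  proof (rule nn_integral_mono)
    fix b assume "b \<in> space (count_space E)"
    then have b1: "b \<ge> 1" using E0 by (cases b) auto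
    show "indicator {b. real b > 1/\<rho>} b * ennreal ((real b + 1) powr (-2*\<delta>))
       \<le> (\<integral>\<^sup>+ x\<in>(phi b -` A \<inter> {0..1}). ennreal (\<bar>deriv (phi b) x\<bar> powr \<delta>) \<partial>\<mu>)"
    proof (cases "real b > 1/\<rho>")
      case True
      have S: "phi b -` A \<inter> {0..1} = {0..1}"
      proof -
        have "phi b x \<in> A" if "x \<in> {0..1}" for x
        proof -
          have p: "real b + x > 0" using b1 that by simp
          have "1/\<rho> < real b + x" using True that by simp
          then have "1 / (real b + x) < \<rho>" using p \<rho> by (simp add: divide_less_eq field_simps)
          then show ?thesis using sub p by (auto simp: phi_def)
        qed
        then show ?thesis by auto
      qed
      have "(\<integral>\<^sup>+ x. ennreal ((real b + 1) powr (-2*\<delta>)) * indicator {0..1} x \<partial>\<mu>)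
          \<le> (\<integral>\<^sup>+ x. ennreal (\<bar>deriv (phi b) x\<bar> powr \<delta>) * indicator {0..1} x \<partial>\<mu>)"
        using integrand_bounds(1)[OF b1 _ \<delta>] by (intro nn_integral_mono) (auto simp: indicator_def intro!: ennreal_leI)
      moreover have "(\<integral>\<^sup>+ x. ennreal ((real b + 1) powr (-2*\<delta>)) * indicator {0..1} x \<partial>\<mu>)
          = ennreal ((real b + 1) powr (-2*\<delta>))"
        using nn_integral_cmult_indicator[OF m01] cp(3) by simp
      ultimately show ?thesis using True S by simp
    next
      case False then show ?thesis by simp
    qed
  qed
  then show ?thesis using cp(4)[OF A] by simp
qed

lemma conf_upper:
  assumes conf: "conformal_measure E \<delta> \<mu>" and E0: "0 \<notin> E" and \<delta>: "\<delta> \<ge> 0"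
    and A: "A \<in> sets borel" and \<rho>: "\<rho> > 0" and sub: "A \<inter> {0<..} \<subseteq> {0<..<\<rho>}"
  shows "emeasure \<mu> A \<le>
    (\<integral>\<^sup>+ b. indicator {b. real b > 1/\<rho> - 1} b * ennreal (real b powr (-2*\<delta>)) \<partial>count_space E)"
proof -
  note cp = conf_parts[OF conf]
  have m01: "{0..1::real} \<in> sets \<mu>" unfolding cp(1) by (rule atLeastAtMost_borel)
  have "(\<integral>\<^sup>+ a. (\<integral>\<^sup>+ x\<in>(phi a -` A \<inter> {0..1}). ennreal (\<bar>deriv (phi a) x\<bar> powr \<delta>) \<partial>\<mu>) \<partial>count_space E)
     \<le> (\<integral>\<^sup>+ b. indicator {b. real b > 1/\<rho> - 1} b * ennreal (real b powr (-2*\<delta>)) \<partial>count_space E)"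
  proof (rule nn_integral_mono)
    fix b assume "b \<in> space (count_space E)"
    then have b1: "b \<ge> 1" using E0 by (cases b) auto
    show "(\<integral>\<^sup>+ x\<in>(phi b -` A \<inter> {0..1}). ennreal (\<bar>deriv (phi b) x\<bar> powr \<delta>) \<partial>\<mu>)
       \<le> indicator {b. real b > 1/\<rho> - 1} b * ennreal (real b powr (-2*\<delta>))"
    proof (cases "real b > 1/\<rho> - 1")
      case True
      have "(\<integral>\<^sup>+ x\<in>(phi b -` A \<inter> {0..1}). ennreal (\<bar>deriv (phi b) x\<bar> powr \<delta>) \<partial>\<mu>)
          \<le> (\<integral>\<^sup>+ x. ennreal (real b powr (-2*\<delta>)) * indicator {0..1} x \<partial>\<mu>)"
        using integrand_bounds(2)[OF b1 _ \<delta>] by (intro nn_integral_mono) (auto simp: indicator_def intro!: ennreal_leI)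
      moreover have "(\<integral>\<^sup>+ x. ennreal (real b powr (-2*\<delta>)) * indicator {0..1} x \<partial>\<mu>)
          = ennreal (real b powr (-2*\<delta>))"
        using nn_integral_cmult_indicator[OF m01] cp(3) by simp
      ultimately show ?thesis using True by simp
    next
      case False
      have S: "phi b -` A \<inter> {0..1} = {}"
      proof -
        have "phi b x \<notin> A" if "x \<in> {0..1}" for x
        proof
          assume xA: "phi b x \<in> A"
          have p: "real b + x > 0" using b1 that by simp
          have "phi b x > 0" using p by (simp add: phi_def)
          then have "phi b x < \<rho>" using sub xA by auto
          then have "1 / (real b + x) < \<rho>" by (simp add: phi_def)
          then have "1 < \<rho> * (real b + x)" using p by (simp add: divide_less_eq)
          then have "1/\<rho> < real b + x" using \<rho> by (simp add: divide_less_eq mult.commute)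
          then show False using False that by simp
        qed
        then show ?thesis by auto
      qed
      show ?thesis using S by simp
    qed
  qed
  then show ?thesis using cp(4)[OF A] by simp
qed



lemma doubling:
  assumes rv: "regularly_varying f s" and ss: "s < s'"
  shows "\<exists>Y. \<forall>y\<ge>Y. f y > 0 \<and> f (2*y) \<le> 2 powr s' * f y"
proof -
  from rv have ev: "eventually (\<lambda>x. f x > 0) at_top"
    and lim: "((\<lambda>x. f (2*x) / f x) \<longlongrightarrow> 2 powr s) at_top"
    unfolding regularly_varying_def by auto
  have "2 powr s < (2::real) powr s'" using ss by simp
  then have ev2: "eventually (\<lambda>x. f (2*x) / f x < 2 powr s') at_top"
    using lim by (rule order_tendstoD(2)[rotated])
  have "eventually (\<lambda>x. f x > 0 \<and> f (2*x) \<le> 2 powr s' * f x) at_top"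
    using ev ev2 by eventually_elim (auto simp: divide_less_eq less_imp_le)
  then show ?thesis by (auto simp: eventually_at_top_linorder)
qed

lemma block:
  fixes M b :: nat
  assumes "M \<ge> 1" "b \<ge> M"
  shows "\<exists>k. 2^k*M \<le> b \<and> b < 2^(Suc k)*M"
  using assms(2)
proof (induction b rule: less_induct)
  case (less b)
  show ?case
  proof (cases "b < 2*M")
    case True
    have "2^0*M \<le> b \<and> b < 2^(Suc 0)*M" using less.prems True by simp
    then show ?thesis by blast
  next
    case False
    then have "b div 2 \<ge> M" by linarith
    moreover have "b div 2 < b" using False assms(1) by simp
    ultimately obtain k where k: "2^k*M \<le> b div 2" "b div 2 < 2^(Suc k)*M" using less.IH by blast
    define P where "P = 2^(Suc k)*M"
    have P1: "P = 2*(2^k*M)" by (simp add: P_def)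
    have P2: "2^(Suc (Suc k))*M = 2*P" by (simp add: P_def)
    have d1: "2*(b div 2) \<le> b" "b \<le> 2*(b div 2) + 1" by presburger+
    have "P \<le> b" using k(1) P1 d1 by linarith
    moreover have "b < 2*P" using k(2) d1 unfolding P_def by linarith
    ultimately have "2^(Suc k)*M \<le> b \<and> b < 2^(Suc (Suc k))*M" using P2 by (auto simp: P_def)
    then show ?thesis by blast
  qed
qed

lemma s_nonneg:
  assumes rv: "regularly_varying f s" and c: "c > 0" and C: "C > 0"
    and cnt: "\<forall>N::nat\<ge>N0. c * f (real N) \<le> real (card (E \<inter> {N..2*N})) \<and>
                  real (card (E \<inter> {N..2*N})) \<le> C * f (real N)"
  shows "s \<ge> 0"
proof (rule ccontr)
  assume "\<not> s \<ge> 0"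
  then have s: "s < s/2" by simp
  obtain Y where Y: "\<forall>y\<ge>Y. f y > 0 \<and> f (2*y) \<le> 2 powr (s/2) * f y"
    using doubling[OF rv s] by blast
  define \<theta> where "\<theta> = (2::real) powr (s/2)"
  have \<theta>1: "\<theta> < 1" "\<theta> > 0" using \<open>\<not> s \<ge> 0\<close> by (auto simp: \<theta>_def powr_less_one)
  define N where "N = max N0 (nat \<lceil>Y\<rceil>) + 1"
  have NY: "real N \<ge> Y" unfolding N_def by linarith
  have NN0: "N \<ge> N0" unfolding N_def by simp
  have ind: "f (real (2^k*N)) \<le> \<theta>^k * f (real N) \<and> real (2^k*N) \<ge> Y" for k
  proof (induction k)
    case 0 then show ?case using NY by simp
  next
    case (Suc k)
    have r: "real (2^Suc k*N) = 2 * real (2^k*N)" by simp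
    have Yk: "real (2^k*N) \<ge> Y" using Suc by blast
    have "real (2^k*N) \<le> real (2^Suc k*N)" by simp
    then have Y2: "real (2^Suc k*N) \<ge> Y" using Yk by linarith
    have "f (2 * real (2^k*N)) \<le> \<theta> * f (real (2^k*N))" using Y Yk unfolding \<theta>_def by blast
    then have "f (real (2^Suc k*N)) \<le> \<theta> * f (real (2^k*N))" by (simp only: r)
    also have "\<dots> \<le> \<theta> * (\<theta>^k * f (real N))" using Suc \<theta>1 by (intro mult_left_mono) auto
    finally show ?case using Y2 by simp
  qed
  have "(\<lambda>k. C * (\<theta>^k * f (real N))) \<longlonglongrightarrow> C * (0 * f (real N))"
    using \<theta>1 by (intro tendsto_intros LIMSEQ_power_zero) auto
  then have "eventually (\<lambda>k. C * (\<theta>^k * f (real N)) < 1) sequentially"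
    by (rule order_tendstoD) simp
  then obtain k where k: "C * (\<theta>^k * f (real N)) < 1" by (auto simp: eventually_sequentially)
  have Ykk: "real (2^k*N) \<ge> Y" using ind by blast
  have pos: "f (real (2^k*N)) > 0" using Y Ykk by blast
  have "N \<le> 2^k*N" by simp
  then have kN0: "2^k*N \<ge> N0" using NN0 by linarith
  have "0 < c * f (real (2^k*N))" using c pos by simp
  also have "\<dots> \<le> real (card (E \<inter> {2^k*N..2*(2^k*N)}))" using cnt kN0 by blast
  finally have "0 < real (card (E \<inter> {2^k*N..2*(2^k*N)}))" .
  then have "card (E \<inter> {2^k*N..2*(2^k*N)}) > 0" by (simp only: of_nat_0_less_iff)
  then have "1 \<le> real (card (E \<inter> {2^k*N..2*(2^k*N)}))" by simp
  also have "\<dots> \<le> C * f (real (2^k*N))" using cnt kN0 by blast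
  also have "\<dots> \<le> C * (\<theta>^k * f (real N))" using ind C by (intro mult_left_mono) auto
  finally show False using k by simp
qed



lemma sum_lower:
  fixes E :: "nat set" and f :: "real \<Rightarrow> real"
  assumes \<delta>: "\<delta> > 0" and K: "K \<ge> 1"
    and uct: "\<forall>x\<ge>X1. f x > 0 \<and> (\<forall>l\<in>{1..2}. f (l*x) \<le> K * f x \<and> f x \<le> K * f (l*x))"
    and c0: "c0 > 0" and cnt: "\<forall>N\<ge>N0. c0 * f (real N) \<le> real (card (E \<inter> {N..2*N}))"
  shows "\<exists>X c. c > 0 \<and> (\<forall>x\<ge>X. ennreal (c * (x powr (-2*\<delta>) * f x)) \<le>
     (\<integral>\<^sup>+ b. indicator {b. real b > x} b * ennreal ((real b + 1) powr (-2*\<delta>)) \<partial>count_space E))"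
proof -
  define X where "X = max (max X1 2) (real N0)"
  define c where "c = c0 / K * 5 powr (-2*\<delta>)"
  show ?thesis
  proof (intro exI conjI allI impI)
    show "c > 0" using c0 K by (simp add: c_def)
    fix x assume x: "X \<le> x"
    have x2: "x \<ge> 2" and xX1: "x \<ge> X1" and xN0: "x \<ge> real N0" using x by (auto simp: X_def)
    define N where "N = nat \<lceil>x\<rceil> + 1"
    have cx: "real (nat \<lceil>x\<rceil>) = of_int \<lceil>x\<rceil>" using x2 by simp
    have NR: "real N = real (nat \<lceil>x\<rceil>) + 1" by (simp add: N_def)
    have Nr: "x + 1 \<le> real N" "real N \<le> x + 2"
      using NR cx ceiling_correct[of x] by linarith+
    have NN0: "N \<ge> N0" using Nr xN0 by linarith
    have fx: "f x > 0" using uct xX1 by blast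
    define l where "l = real N / x"
    have l: "l \<in> {1..2}" using Nr x2 by (auto simp: l_def field_simps)
    have lx: "l * x = real N" using x2 by (simp add: l_def)
    have fN: "f x \<le> K * f (real N)" using uct xX1 l lx by metis
    define B where "B = E \<inter> {N..2*N}"
    have card: "c0 * f (real N) \<le> real (card B)" using cnt NN0 by (simp add: B_def)
    define P where "P = (real (2*N) + 1) powr (-2*\<delta>)"
    have pw: "(5*x) powr (-2*\<delta>) \<le> P"
      unfolding P_def using Nr x2 \<delta> by (intro powr_mono2') auto
    have P0: "P \<ge> 0" by (simp add: P_def)
    have i1: "(\<integral>\<^sup>+ b. ennreal P * indicator B b \<partial>count_space E)
        \<le> (\<integral>\<^sup>+ b. indicator {b. real b > x} b * ennreal ((real b + 1) powr (-2*\<delta>)) \<partial>count_space E)"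
    proof (rule nn_integral_mono)
      fix b assume b: "b \<in> space (count_space E)"
      show "ennreal P * indicator B b \<le> indicator {b. real b > x} b * ennreal ((real b + 1) powr (-2*\<delta>))"
      proof (cases "b \<in> B")
        case True
        then have bN: "N \<le> b" "b \<le> 2*N" by (auto simp: B_def)
        then have "real b > x" using Nr by linarith
        moreover have "P \<le> (real b + 1) powr (-2*\<delta>)"
          unfolding P_def using bN \<delta> by (intro powr_mono2') auto
        ultimately show ?thesis using True by (simp add: ennreal_leI)
      qed simp
    qed
    have i2: "(\<integral>\<^sup>+ b. ennreal P * indicator B b \<partial>count_space E) = ennreal (P * real (card B))"
    proof -
      have "B \<in> sets (count_space E)" by (auto simp: B_def)
      then have "(\<integral>\<^sup>+ b. ennreal P * indicator B b \<partial>count_space E) = ennreal P * emeasure (count_space E) B"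
        by (rule nn_integral_cmult_indicator)
      also have "\<dots> = ennreal P * of_nat (card B)" by (simp add: B_def)
      also have "\<dots> = ennreal (P * real (card B))" using P0 by (simp add: ennreal_mult ennreal_of_nat_eq_real_of_nat)
      finally show ?thesis .
    qed
    have i3: "c * (x powr (-2*\<delta>) * f x) \<le> P * real (card B)"
    proof -
      have e5: "(5*x) powr (-2*\<delta>) = 5 powr (-2*\<delta>) * x powr (-2*\<delta>)"
        using x2 by (simp add: powr_mult)
      have "c * (x powr (-2*\<delta>) * f x) = c0 * (5*x) powr (-2*\<delta>) * (f x / K)"
        unfolding c_def e5 using K by (simp add: field_simps)
      also have "\<dots> \<le> c0 * P * f (real N)"
      proof -
        have "f x / K \<le> f (real N)" using fN K by (simp add: divide_le_eq mult.commute)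
        moreover have "f x / K \<ge> 0" using fx K by simp
        moreover have "c0 * (5*x) powr (-2*\<delta>) \<le> c0 * P" using pw c0 by simp
        moreover have "c0 * P \<ge> 0" using c0 P0 by simp
        ultimately show ?thesis by (meson mult_mono order_refl)
      qed
      also have "\<dots> = P * (c0 * f (real N))" by simp
      also have "\<dots> \<le> P * real (card B)" using card P0 by (rule mult_left_mono)
      finally show ?thesis .
    qed
    show "ennreal (c * (x powr (-2*\<delta>) * f x)) \<le>
     (\<integral>\<^sup>+ b. indicator {b. real b > x} b * ennreal ((real b + 1) powr (-2*\<delta>)) \<partial>count_space E)"
      using order_trans[OF ennreal_leI[OF i3] i1[unfolded i2]] .
  qed
qed



lemma sum_upper:
  fixes E :: "nat set" and f :: "real \<Rightarrow> real"
  assumes \<delta>: "\<delta> > 0" and K: "K \<ge> 1"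
    and uct: "\<forall>x\<ge>X1. f x > 0 \<and> (\<forall>l\<in>{1..2}. f (l*x) \<le> K * f x \<and> f x \<le> K * f (l*x))"
    and C0: "C0 > 0" and cnt: "\<forall>N\<ge>N0. real (card (E \<inter> {N..2*N})) \<le> C0 * f (real N)"
    and dbl: "\<forall>y\<ge>Y. f y > 0 \<and> f (2*y) \<le> 2 powr s' * f y" and s': "s' < 2*\<delta>"
  shows "\<exists>X C. C > 0 \<and> (\<forall>x\<ge>X. (\<integral>\<^sup>+ b. indicator {b. real b > x - 1} b * ennreal (real b powr (-2*\<delta>)) \<partial>count_space E)
            \<le> ennreal (C * (x powr (-2*\<delta>) * f x)))"
proof -
  define q where "q = (2::real) powr (s' - 2*\<delta>)"
  have q: "0 < q" "q < 1" using s' by (auto simp: q_def powr_less_one)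
  define X where "X = max 4 (max (2*X1+2) (max (2*Y+2) (2*real N0+2)))"
  define C where "C = C0 * K^2 * 4 powr (2*\<delta>) / (1-q)"
  show ?thesis
  proof (intro exI conjI allI impI)
    show "C > 0" using C0 K q by (simp add: C_def)
    fix x assume x: "X \<le> x"
    have x4: "x \<ge> 4" and xX1: "x \<ge> 2*X1+2" and xY: "x \<ge> 2*Y+2" and xN0: "x \<ge> 2*real N0+2"
      using x by (auto simp: X_def)
    define M where "M = nat \<lfloor>x/2\<rfloor>"
    have cM: "real M = of_int \<lfloor>x/2\<rfloor>" using x4 by (simp add: M_def)
    have Mr: "real M \<le> x/2" "real M > x/2 - 1" using cM floor_correct[of "x/2"] by linarith+
    have M1r: "real M \<ge> 1" using Mr x4 by linarith
    then have M1: "M \<ge> 1" by simp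
    have MX1: "real M \<ge> X1" and MY: "real M \<ge> Y" using Mr xX1 xY by linarith+
    have "real M \<ge> real N0" using Mr xN0 by linarith
    then have MN0: "M \<ge> N0" by simp
    define w where "w k = real (2^k*M) powr (-2*\<delta>)" for k
    define h where "h k = f (real (2^k*M)) * w k" for k
    define Bk where "Bk k = E \<inter> {2^k*M..2*(2^k*M)}" for k
    have geM: "real (2^k*M) \<ge> real M" for k
    proof -
      have "M \<le> 2^k*M" by simp
      then show ?thesis by (simp only: of_nat_le_iff)
    qed
    have pos: "real (2^k*M) > 0" for k using M1 by simp
    have w0: "w k \<ge> 0" for k by (simp add: w_def)
    have hq: "h k \<le> q^k * h 0" for k
    proof (induction k)
      case 0 then show ?case by simp
    next
      case (Suc k)
      define y where "y = real (2^k*M)"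
      have yY: "y \<ge> Y" using geM[of k] MY by (simp add: y_def)
      have yp: "y > 0" using pos by (simp add: y_def)
      have r: "real (2^Suc k*M) = 2 * y" by (simp add: y_def)
      have wS: "w (Suc k) = 2 powr (-2*\<delta>) * w k"
        unfolding w_def r using yp by (simp add: powr_mult y_def)
      have fy: "f y > 0" "f (2*y) \<le> 2 powr s' * f y" using dbl yY by auto
      have "h (Suc k) = f (2*y) * (2 powr (-2*\<delta>) * w k)" unfolding h_def by (simp only: r wS)
      also have "\<dots> \<le> (2 powr s' * f y) * (2 powr (-2*\<delta>) * w k)"
        using fy w0[of k] by (intro mult_right_mono) auto
      also have "\<dots> = q * h k" by (simp add: q_def h_def y_def powr_diff powr_minus field_simps)
      also have "\<dots> \<le> q * (q^k * h 0)" using Suc q by (intro mult_left_mono) auto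
      finally show ?case by simp
    qed
    have pt: "indicator {b. real b > x - 1} b * ennreal (real b powr (-2*\<delta>))
        \<le> (\<Sum>k. ennreal (w k) * indicator (Bk k) b)" if bE: "b \<in> E" for b
    proof (cases "real b > x - 1")
      case True
      then have "b \<ge> M" using Mr x4 by simp
      then obtain k where k: "2^k*M \<le> b" "b < 2^(Suc k)*M" using block[OF M1] by blast
      have bB: "b \<in> Bk k" using k bE by (auto simp: Bk_def)
      have kb: "real (2^k*M) \<le> real b" using k(1) by (simp only: of_nat_le_iff)
      have "real b powr (-2*\<delta>) \<le> w k"
        unfolding w_def using pos[of k] kb \<delta> by (intro powr_mono2') auto
      then have "indicator {b. real b > x - 1} b * ennreal (real b powr (-2*\<delta>)) \<le> ennreal (w k) * indicator (Bk k) b"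
        using True bB by (simp add: ennreal_leI)
      also have "\<dots> \<le> (\<Sum>k. ennreal (w k) * indicator (Bk k) b)"
      proof -
        define g where "g j = ennreal (w j) * indicator (Bk j) b" for j
        have "sum g {k} \<le> suminf g" by (rule sum_le_suminf) (auto intro: summableI)
        then have "g k \<le> suminf g" by simp
        then show ?thesis unfolding g_def .
      qed
      finally show ?thesis .
    qed simp
    have I1: "(\<integral>\<^sup>+ b. indicator {b. real b > x - 1} b * ennreal (real b powr (-2*\<delta>)) \<partial>count_space E)
        \<le> (\<integral>\<^sup>+ b. (\<Sum>k. ennreal (w k) * indicator (Bk k) b) \<partial>count_space E)"
      by (rule nn_integral_mono) (use pt in simp)
    have I2: "(\<integral>\<^sup>+ b. (\<Sum>k. ennreal (w k) * indicator (Bk k) b) \<partial>count_space E)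
        = (\<Sum>k. \<integral>\<^sup>+ b. ennreal (w k) * indicator (Bk k) b \<partial>count_space E)"
      by (rule nn_integral_suminf) (rule borel_measurable_count_space)
    have I3: "(\<integral>\<^sup>+ b. ennreal (w k) * indicator (Bk k) b \<partial>count_space E) \<le> ennreal (C0 * h 0 * q^k)" for k
    proof -
      have "Bk k \<in> sets (count_space E)" by (auto simp: Bk_def)
      then have "(\<integral>\<^sup>+ b. ennreal (w k) * indicator (Bk k) b \<partial>count_space E) = ennreal (w k) * emeasure (count_space E) (Bk k)"
        by (rule nn_integral_cmult_indicator)
      also have "\<dots> = ennreal (w k * real (card (Bk k)))"
        using w0[of k] by (simp add: Bk_def ennreal_mult ennreal_of_nat_eq_real_of_nat)
      also have "\<dots> \<le> ennreal (C0 * h 0 * q^k)"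
      proof (rule ennreal_leI)
        have "M \<le> 2^k*M" by simp
        then have kN0: "2^k*M \<ge> N0" using MN0 by linarith
        have "real (card (Bk k)) \<le> C0 * f (real (2^k*M))" using cnt kN0 unfolding Bk_def by blast
        then have "w k * real (card (Bk k)) \<le> w k * (C0 * f (real (2^k*M)))"
          using w0[of k] by (rule mult_left_mono)
        also have "\<dots> = C0 * h k" by (simp add: h_def)
        also have "\<dots> \<le> C0 * (q^k * h 0)" using hq[of k] C0 by simp
        finally show "w k * real (card (Bk k)) \<le> C0 * h 0 * q^k" by (simp add: ac_simps)
      qed
      finally show ?thesis .
    qed
    have h0: "h 0 \<ge> 0"
    proof -
      have "f (real M) > 0" using uct MX1 by blast
      then show ?thesis using w0[of 0] by (simp add: h_def)
    qed
    have I4: "(\<Sum>k. ennreal (C0 * h 0 * q^k)) = ennreal (C0 * h 0 / (1 - q))"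
    proof -
      have sg: "summable (\<lambda>k. q^k)" using q by (intro summable_geometric) simp
      have "(\<Sum>k. ennreal (C0 * h 0 * q^k)) = ennreal (\<Sum>k. C0 * h 0 * q^k)"
        using sg C0 h0 q by (intro suminf_ennreal2) (auto intro!: summable_mult)
      also have "(\<Sum>k. C0 * h 0 * q^k) = C0 * h 0 * (1 / (1 - q))"
        using suminf_mult[OF sg, of "C0 * h 0"] suminf_geometric[of q] q by simp
      finally show ?thesis by simp
    qed
    have I5: "C0 * h 0 / (1 - q) \<le> C * (x powr (-2*\<delta>) * f x)"
    proof -
      have fM: "f (real M) \<le> K * f (2 * real M)" using uct MX1 by auto
      have X12: "2 * real M \<ge> X1" using MX1 M1r by linarith
      define l where "l = x / (2 * real M)"
      have l: "l \<in> {1..2}" using Mr M1r x4 by (auto simp: l_def field_simps)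
      have lx: "l * (2 * real M) = x" using M1r by (simp add: l_def)
      have f2M: "f (2 * real M) \<le> K * f x" using uct X12 l lx by metis
      have "K * f (2*real M) \<le> K * (K * f x)" using f2M K by (intro mult_left_mono) auto
      moreover have "K^2 * f x = K * (K * f x)" by (simp add: power2_eq_square)
      ultimately have fMx: "f (real M) \<le> K^2 * f x" using fM by linarith
      have "x \<ge> X1" using Mr MX1 M1r by linarith
      then have fx: "f x \<ge> 0" using uct by (simp add: less_imp_le)
      have wM: "w 0 \<le> 4 powr (2*\<delta>) * x powr (-2*\<delta>)"
      proof -
        have "w 0 \<le> (x/4) powr (-2*\<delta>)" unfolding w_def using Mr x4 \<delta> by (intro powr_mono2') auto
        also have "(x/4) powr (-2*\<delta>) = x powr (-2*\<delta>) / 4 powr (-2*\<delta>)"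
          using x4 by (simp add: powr_divide)
        also have "4 powr (-2*\<delta>) = 1 / 4 powr (2*\<delta>)"
          using powr_minus_divide[of 4 "2*\<delta>"] by simp
        also have "x powr (-2*\<delta>) / (1 / 4 powr (2*\<delta>)) = 4 powr (2*\<delta>) * x powr (-2*\<delta>)"
          by simp
        finally show ?thesis .
      qed
      have fMp: "f (real M) \<ge> 0" using uct MX1 by (simp add: less_imp_le)
      have "h 0 = f (real M) * w 0" by (simp add: h_def)
      also have "\<dots> \<le> (K^2 * f x) * (4 powr (2*\<delta>) * x powr (-2*\<delta>))"
        using fMx wM fMp w0[of 0] by (intro mult_mono) auto
      finally have "h 0 \<le> K^2 * 4 powr (2*\<delta>) * (x powr (-2*\<delta>) * f x)" by (simp add: ac_simps)
      then have "C0 * h 0 \<le> C0 * (K^2 * 4 powr (2*\<delta>) * (x powr (-2*\<delta>) * f x))"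
        using C0 by simp
      then have "C0 * h 0 / (1 - q) \<le> C0 * (K^2 * 4 powr (2*\<delta>) * (x powr (-2*\<delta>) * f x)) / (1 - q)"
        using q by (intro divide_right_mono) auto
      also have "\<dots> = C * (x powr (-2*\<delta>) * f x)" by (simp add: C_def)
      finally show ?thesis .
    qed
    have I6: "(\<Sum>k. \<integral>\<^sup>+ b. ennreal (w k) * indicator (Bk k) b \<partial>count_space E) \<le> (\<Sum>k. ennreal (C0 * h 0 * q^k))"
      by (intro suminf_le I3 summableI)
    show "(\<integral>\<^sup>+ b. indicator {b. real b > x - 1} b * ennreal (real b powr (-2*\<delta>)) \<partial>count_space E)
            \<le> ennreal (C * (x powr (-2*\<delta>) * f x))"
      using order_trans[OF I1[unfolded I2] order_trans[OF I6[unfolded I4] ennreal_leI[OF I5]]] .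
  qed
qed



lemma inv_powr: fixes r \<delta> :: real assumes "r > 0" shows "(1/r) powr (-2*\<delta>) = r powr (2*\<delta>)"
proof -
  have "(1/r) powr (-2*\<delta>) = 1 powr (-2*\<delta>) / r powr (-2*\<delta>)" using assms by (simp add: powr_divide)
  also have "\<dots> = 1 / r powr (-2*\<delta>)" by simp
  also have "r powr (-2*\<delta>) = 1 / r powr (2*\<delta>)" using powr_minus_divide[of r "2*\<delta>"] by simp
  finally show ?thesis by simp
qed

lemma meas_bounds:
  assumes p: "prob_space \<mu>" and l: "ennreal L \<le> emeasure \<mu> A" and u: "emeasure \<mu> A \<le> ennreal U" and U: "0 \<le> U"
  shows "L \<le> measure \<mu> A \<and> measure \<mu> A \<le> U"
proof -
  interpret P: prob_space \<mu> by (rule p)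
  have e: "emeasure \<mu> A = ennreal (measure \<mu> A)"
    by (rule P.emeasure_eq_measure)
  have m: "measure \<mu> A \<ge> 0" by simp
  have "L \<le> measure \<mu> A" using l m unfolding e by (simp add: ennreal_le_iff)
  moreover have "measure \<mu> A \<le> U" using u U unfolding e by (simp add: ennreal_le_iff)
  ultimately show ?thesis by blast
qed


lemma inv_gt:
  fixes R r :: real
  assumes "R \<ge> 1" "0 < r" "r < 1/(2*R)"
  shows "1/r > 2*R"
proof -
  have "r * (2*R) < 1" using assms by (simp add: field_simps)
  then show ?thesis using assms(2) by (simp add: field_simps)
qed

theorem mainTheorem10:
  fixes E :: "nat set" and \<delta> s :: real and \<mu> :: "real measure" and f :: "real \<Rightarrow> real"
  assumes E_pos: "0 \<notin> E"
    and regular: "pressure_vanishes_at E \<delta>"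
    and conf: "conformal_measure E \<delta> \<mu>"
    and rv: "regularly_varying f s"
    and s_lt: "s < 2 * \<delta>"
    and count: "\<exists>c C N0. c > 0 \<and> C > 0 \<and> (\<forall>N::nat \<ge> N0.
                  c * f (real N) \<le> real (card (E \<inter> {N..2*N})) \<and>
                  real (card (E \<inter> {N..2*N})) \<le> C * f (real N))"
  shows "\<exists>r0 c C. r0 > 0 \<and> c > 0 \<and> C > 0 \<and>
           (\<forall>r. 0 < r \<and> r < r0 \<longrightarrow>
              c * (r powr (2 * \<delta>) * f (1 / r)) \<le> measure \<mu> (ball 0 r) \<and>
              measure \<mu> (ball 0 r) \<le> C * (r powr (2 * \<delta>) * f (1 / r))) \<and>
           (\<forall>a\<in>E. \<forall>r. 1 / real a \<le> r \<and> r \<le> 1 \<and> r < r0 \<longrightarrow>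
              c * (r powr (2 * \<delta>) * f (1 / r)) \<le> measure \<mu> (nbhd (cyl a) r) \<and>
              measure \<mu> (nbhd (cyl a) r) \<le> C * (r powr (2 * \<delta>) * f (1 / r)))"
proof -
  obtain c0 C0 N0 where c0: "c0 > 0" and C0: "C0 > 0" and cnt: "\<forall>N::nat\<ge>N0.
                  c0 * f (real N) \<le> real (card (E \<inter> {N..2*N})) \<and>
                  real (card (E \<inter> {N..2*N})) \<le> C0 * f (real N)" using count by blast
  have cntL: "\<forall>N\<ge>N0. c0 * f (real N) \<le> real (card (E \<inter> {N..2*N}))" using cnt by blast
  have cntU: "\<forall>N\<ge>N0. real (card (E \<inter> {N..2*N})) \<le> C0 * f (real N)" using cnt by blast
  have s0: "s \<ge> 0" by (rule s_nonneg[OF rv c0 C0 cnt])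
  have \<delta>: "\<delta> > 0" using s0 s_lt by linarith
  obtain K X1 where K: "K \<ge> 1" and X1: "X1 > 0" and uct: "\<forall>x\<ge>X1. f x > 0 \<and>
           (\<forall>l\<in>{1..2}. f (l*x) \<le> K * f x \<and> f x \<le> K * f (l*x))" using rv_uct[OF rv] by blast
  define s' where "s' = (s + 2*\<delta>)/2"
  have ss: "s < s'" "s' < 2*\<delta>" using s_lt by (auto simp: s'_def)
  obtain Y where dbl: "\<forall>y\<ge>Y. f y > 0 \<and> f (2*y) \<le> 2 powr s' * f y" using doubling[OF rv ss(1)] by blast
  obtain XL cL where cL: "cL > 0" and low: "\<forall>x\<ge>XL. ennreal (cL * (x powr (-2*\<delta>) * f x)) \<le>
     (\<integral>\<^sup>+ b. indicator {b. real b > x} b * ennreal ((real b + 1) powr (-2*\<delta>)) \<partial>count_space E)"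
    using sum_lower[OF \<delta> K uct c0 cntL] by blast
  obtain XU CU where CU: "CU > 0" and up: "\<forall>x\<ge>XU. (\<integral>\<^sup>+ b. indicator {b. real b > x - 1} b * ennreal (real b powr (-2*\<delta>)) \<partial>count_space E)
            \<le> ennreal (CU * (x powr (-2*\<delta>) * f x))"
    using sum_upper[OF \<delta> K uct C0 cntU dbl ss(2)] by blast
  define R where "R = max 1 (max XL (max XU X1))"
  have R: "R \<ge> 1" "R \<ge> XL" "R \<ge> XU" "R \<ge> X1" by (auto simp: R_def)
  define r0 where "r0 = 1 / (2*R)"
  have r0: "r0 > 0" using R by (simp add: r0_def)
  have big: "1/r > 2*R" if "0 < r" "r < r0" for r
    using inv_gt[OF R(1) that(1)] that(2) unfolding r0_def by blast
  have p2: "2 powr (2*\<delta>) \<ge> (1::real)" using \<delta> by (intro ge_one_powr_ge_zero) auto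
  define C where "C = CU * 2 powr (2*\<delta>) * K"
  have CUC: "CU \<le> C"
  proof -
    have "1 * 1 \<le> 2 powr (2*\<delta>) * K" using mult_mono[OF p2 K] by simp
    then have "1 \<le> 2 powr (2*\<delta>) * K" by simp
    then have "CU * 1 \<le> CU * (2 powr (2*\<delta>) * K)" using CU by (intro mult_left_mono) auto
    then show ?thesis by (simp add: C_def mult.assoc)
  qed
  have Cpos: "C > 0" using CUC CU by linarith
  note cp = conf_parts[OF conf]
  have \<delta>0: "\<delta> \<ge> 0" using \<delta> by simp
  have LOW: "ennreal (cL * (r powr (2 * \<delta>) * f (1 / r))) \<le> emeasure \<mu> A"
    if A: "A \<in> sets borel" and r: "0 < r" "r < r0" and sub: "{0<..<r} \<subseteq> A" for A r
  proof -
    have x: "1/r \<ge> XL" using big[OF r] R by linarith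
    have "ennreal (cL * ((1/r) powr (-2*\<delta>) * f (1/r))) \<le>
     (\<integral>\<^sup>+ b. indicator {b. real b > 1/r} b * ennreal ((real b + 1) powr (-2*\<delta>)) \<partial>count_space E)"
      using low x by blast
    also have "\<dots> \<le> emeasure \<mu> A" by (rule conf_lower[OF conf E_pos \<delta>0 A r(1) sub])
    finally show ?thesis using inv_powr[OF r(1), of \<delta>] by simp
  qed
  have fpos: "f (1/r) > 0" if r: "0 < r" "r < r0" for r
  proof -
    have "1/r \<ge> X1" using big[OF r] R by linarith
    then show ?thesis using uct by blast
  qed
  have stuff0: "r powr (2 * \<delta>) * f (1 / r) \<ge> 0" if r: "0 < r" "r < r0" for r
    using fpos[OF r] by simp
  show ?thesis
  proof (intro exI conjI allI impI ballI)
    show "r0 > 0" by (rule r0)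
    show "cL > 0" by (rule cL)
    show "C > 0" by (rule Cpos)
  next
    fix r assume rr: "0 < r \<and> r < r0"
    then have r: "0 < r" "r < r0" by auto
    have A: "ball (0::real) r \<in> sets borel" by (rule borel_open[OF open_ball])
    have sub1: "{0<..<r} \<subseteq> ball (0::real) r" by (auto simp: dist_real_def)
    have sub2: "ball (0::real) r \<inter> {0<..} \<subseteq> {0<..<r}" by (auto simp: dist_real_def)
    have l: "ennreal (cL * (r powr (2 * \<delta>) * f (1 / r))) \<le> emeasure \<mu> (ball 0 r)"
      by (rule LOW[OF A r sub1])
    have x: "1/r \<ge> XU" using big[OF r] R by linarith
    have "emeasure \<mu> (ball 0 r) \<le>
      (\<integral>\<^sup>+ b. indicator {b. real b > 1/r - 1} b * ennreal (real b powr (-2*\<delta>)) \<partial>count_space E)"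
      by (rule conf_upper[OF conf E_pos \<delta>0 A r(1) sub2])
    also have "\<dots> \<le> ennreal (CU * ((1/r) powr (-2*\<delta>) * f (1/r)))" using up x by blast
    also have "\<dots> \<le> ennreal (C * (r powr (2 * \<delta>) * f (1 / r)))"
      using inv_powr[OF r(1), of \<delta>] CUC stuff0[OF r] by (intro ennreal_leI) (simp add: mult_right_mono)
    finally have u: "emeasure \<mu> (ball 0 r) \<le> ennreal (C * (r powr (2 * \<delta>) * f (1 / r)))" .
    have "0 \<le> C * (r powr (2 * \<delta>) * f (1 / r))" using Cpos stuff0[OF r] by simp
    with meas_bounds[OF cp(2) l u] show "cL * (r powr (2 * \<delta>) * f (1 / r)) \<le> measure \<mu> (ball 0 r)"
      and "measure \<mu> (ball 0 r) \<le> C * (r powr (2 * \<delta>) * f (1 / r))" by auto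
  next
    fix a r assume aE: "a \<in> E" and rr: "1 / real a \<le> r \<and> r \<le> 1 \<and> r < r0"
    have a1: "a \<ge> 1" using aE E_pos by (cases a) auto
    have ar: "1 / real a \<le> r" and r1: "r \<le> 1" and rr0: "r < r0" using rr by auto
    have "1 / real a > 0" using a1 by simp
    then have rp: "r > 0" using ar by linarith
    have r: "0 < r" "r < r0" using rp rr0 by auto
    have A: "nbhd (cyl a) r \<in> sets borel"
      unfolding nbhd_def by (rule borel_open) (auto intro!: open_UN)
    have sub1: "{0<..<r} \<subseteq> nbhd (cyl a) r"
    proof
      fix y assume y: "y \<in> {0<..<r}"
      define p where "p = phi a 1"
      have pc: "p \<in> cyl a" unfolding cyl_def p_def by auto
      have p0: "p > 0" "p \<le> 1 / real a" using a1 by (auto simp: p_def phi_def frac_le)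
      have "p \<le> r" using p0 ar by linarith
      then have "dist p y < r" using y p0 by (auto simp: dist_real_def)
      then show "y \<in> nbhd (cyl a) r" using pc unfolding nbhd_def by auto
    qed
    have sub2: "nbhd (cyl a) r \<inter> {0<..} \<subseteq> {0<..<2*r}"
    proof
      fix z assume z: "z \<in> nbhd (cyl a) r \<inter> {0<..}"
      then obtain y where y: "y \<in> {0..1}" and zb: "dist (phi a y) z < r"
        unfolding nbhd_def cyl_def by auto
      have "phi a y \<le> 1 / real a" using a1 y by (auto simp: phi_def frac_le)
      then have "z < 2*r" using zb ar by (auto simp: dist_real_def)
      then show "z \<in> {0<..<2*r}" using z by auto
    qed
    have l: "ennreal (cL * (r powr (2 * \<delta>) * f (1 / r))) \<le> emeasure \<mu> (nbhd (cyl a) r)"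
      by (rule LOW[OF A r sub1])
    have h2: "1/(2*r) > R" using big[OF r] r by (simp add: field_simps)
    have x: "1/(2*r) \<ge> XU" using h2 R by linarith
    have x1: "1/(2*r) \<ge> X1" using h2 R by linarith
    have r2: "2*r > 0" using r by simp
    have e2: "1/(2*r) - 1 = 1/(2*r) - 1" ..
    have "emeasure \<mu> (nbhd (cyl a) r) \<le>
      (\<integral>\<^sup>+ b. indicator {b. real b > 1/(2*r) - 1} b * ennreal (real b powr (-2*\<delta>)) \<partial>count_space E)"
      by (rule conf_upper[OF conf E_pos \<delta>0 A r2 sub2])
    also have "\<dots> \<le> ennreal (CU * ((1/(2*r)) powr (-2*\<delta>) * f (1/(2*r))))" using up x by blast
    also have "\<dots> \<le> ennreal (C * (r powr (2 * \<delta>) * f (1 / r)))"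
    proof (rule ennreal_leI)
      have pw: "(1/(2*r)) powr (-2*\<delta>) = 2 powr (2*\<delta>) * r powr (2*\<delta>)"
        using inv_powr[OF r2, of \<delta>] r by (simp add: powr_mult)
      have two: "(2::real) \<in> {1..2}" by simp
      have "f (1/(2*r)) \<le> K * f (2 * (1/(2*r)))" using uct x1 two by blast
      then have ff: "f (1/(2*r)) \<le> K * f (1/r)" by simp
      have fp: "f (1/(2*r)) \<ge> 0" using uct x1 by (simp add: less_imp_le)
      have "CU * ((1/(2*r)) powr (-2*\<delta>) * f (1/(2*r))) = (CU * 2 powr (2*\<delta>) * r powr (2*\<delta>)) * f (1/(2*r))"
        unfolding pw by (simp only: ac_simps)
      also have "\<dots> \<le> (CU * 2 powr (2*\<delta>) * r powr (2*\<delta>)) * (K * f (1/r))"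
        using ff CU by (intro mult_left_mono) auto
      also have "\<dots> = C * (r powr (2 * \<delta>) * f (1 / r))" by (simp add: C_def)
      finally show "CU * ((1/(2*r)) powr (-2*\<delta>) * f (1/(2*r))) \<le> C * (r powr (2 * \<delta>) * f (1 / r))" .
    qed
    finally have u: "emeasure \<mu> (nbhd (cyl a) r) \<le> ennreal (C * (r powr (2 * \<delta>) * f (1 / r)))" .
    have "0 \<le> C * (r powr (2 * \<delta>) * f (1 / r))" using Cpos stuff0[OF r] by simp
    with meas_bounds[OF cp(2) l u] show "cL * (r powr (2 * \<delta>) * f (1 / r)) \<le> measure \<mu> (nbhd (cyl a) r)"
      and "measure \<mu> (nbhd (cyl a) r) \<le> C * (r powr (2 * \<delta>) * f (1 / r))" by auto
  qed
qed

end
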